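(* Let $H$ be a non-transitive tournament. If $H$ is not strongly connected, then $H$ is not quasirandom-forcing.
   Context: A tournament is an orientation of a complete graph; $\mathrm{Aut}(H)$ is its automorphism group. For tournaments $H,G$, $d(H,G)$ is the probability that $\lvert H\rvert$ uniformly random distinct vertices of $G$ induce a tournament isomorphic to $H$ (and $0$ if $\lvert H\rvert>\lvert G\rvert$). A sequence $(G_n)$ of tournaments with $\lvert G_n\rvert\to\infty$ is quasirandom if $\lim_{n\to\infty} d(F,G_n)=\frac{m!}{\lvert\mathrm{Aut}(F)\rvert}2^{-\binom{m}{2}}$ for every tournament $F$ with $m$ vertices. A $k$-vertex tournament $H$ is quasirandom-forcing if every sequence $(G_n)$ of tournaments with $\lvert G_n\rvert\to\infty$ and $\lim_{n\to\infty} d(H,G_n)=\frac{k!}{\lvert\mathrm{Aut}(H)\rvert}2^{-\binom{k}{2}}$ is quasirandom. *)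

theory Defs
  imports Complex_Main "HOL-Combinatorics.Permutations"
begin

text \<open>A tournament on the vertex set {0..<n} is given by an arc relation E
(E u v means the arc is directed from u to v); values outside {0..<n} are irrelevant.\<close>

definition tournament :: "nat \<Rightarrow> (nat \<Rightarrow> nat \<Rightarrow> bool) \<Rightarrow> bool" where
  "tournament n E \<longleftrightarrow> (\<forall>u<n. \<not> E u u) \<and> (\<forall>u<n. \<forall>v<n. u \<noteq> v \<longrightarrow> (E u v \<longleftrightarrow> \<not> E v u))"

definition transitive_tournament :: "nat \<Rightarrow> (nat \<Rightarrow> nat \<Rightarrow> bool) \<Rightarrow> bool" where
  "transitive_tournament n E \<longleftrightarrow> (\<forall>u<n. \<forall>v<n. \<forall>w<n. E u v \<and> E v w \<longrightarrow> E u w)"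

definition strongly_connected :: "nat \<Rightarrow> (nat \<Rightarrow> nat \<Rightarrow> bool) \<Rightarrow> bool" where
  "strongly_connected n E \<longleftrightarrow>
     (\<forall>u<n. \<forall>v<n. (\<lambda>x y. x < n \<and> y < n \<and> E x y)\<^sup>*\<^sup>* u v)"

definition Aut :: "nat \<Rightarrow> (nat \<Rightarrow> nat \<Rightarrow> bool) \<Rightarrow> (nat \<Rightarrow> nat) set" where
  "Aut k H = {p. p permutes {0..<k} \<and> (\<forall>u<k. \<forall>v<k. H u v \<longleftrightarrow> H (p u) (p v))}"

definition induces_copy ::
  "nat \<Rightarrow> (nat \<Rightarrow> nat \<Rightarrow> bool) \<Rightarrow> (nat \<Rightarrow> nat \<Rightarrow> bool) \<Rightarrow> nat set \<Rightarrow> bool" where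
  "induces_copy k H G S \<longleftrightarrow>
     (\<exists>f. bij_betw f {0..<k} S \<and> (\<forall>u<k. \<forall>v<k. H u v \<longleftrightarrow> G (f u) (f v)))"

text \<open>d(H,G): probability that k uniformly random distinct vertices of G (on {0..<n})
  induce a copy of H; equals 0 when k > n (then there are no k-subsets and n choose k = 0).\<close>
definition density ::
  "nat \<Rightarrow> (nat \<Rightarrow> nat \<Rightarrow> bool) \<Rightarrow> nat \<Rightarrow> (nat \<Rightarrow> nat \<Rightarrow> bool) \<Rightarrow> real" where
  "density k H n G =
     real (card {S. S \<subseteq> {0..<n} \<and> card S = k \<and> induces_copy k H G S}) / real (n choose k)"

definition random_density :: "nat \<Rightarrow> (nat \<Rightarrow> nat \<Rightarrow> bool) \<Rightarrow> real" where
  "random_density m F = fact m / real (card (Aut m F)) / 2 ^ (m choose 2)"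

text \<open>A sequence of tournaments: i-th tournament has vertex set {0..<sz i} and arcs Gs i.\<close>
definition quasirandom :: "(nat \<Rightarrow> nat) \<Rightarrow> (nat \<Rightarrow> nat \<Rightarrow> nat \<Rightarrow> bool) \<Rightarrow> bool" where
  "quasirandom sz Gs \<longleftrightarrow>
     (\<forall>m F. tournament m F \<longrightarrow>
        (\<lambda>i. density m F (sz i) (Gs i)) \<longlonglongrightarrow> random_density m F)"

definition quasirandom_forcing :: "nat \<Rightarrow> (nat \<Rightarrow> nat \<Rightarrow> bool) \<Rightarrow> bool" where
  "quasirandom_forcing k H \<longleftrightarrow>
     (\<forall>sz Gs. (\<forall>i. tournament (sz i) (Gs i)) \<longrightarrow> filterlim sz at_top sequentially \<longrightarrow>
        (\<lambda>i. density k H (sz i) (Gs i)) \<longlonglongrightarrow> random_density k H \<longrightarrow>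
        quasirandom sz Gs)"

end

theory Submission
  imports Defs "HOL-Library.FuncSet"
begin

definition cnt :: "nat \<Rightarrow> (nat \<Rightarrow> nat \<Rightarrow> bool) \<Rightarrow> nat \<Rightarrow> (nat \<Rightarrow> nat \<Rightarrow> bool) \<Rightarrow> nat" where
  "cnt k H n G = card {S. S \<subseteq> {0..<n} \<and> card S = k \<and> induces_copy k H G S}"

definition isoemb :: "nat \<Rightarrow> (nat \<Rightarrow> nat \<Rightarrow> bool) \<Rightarrow> (nat \<Rightarrow> nat \<Rightarrow> bool) \<Rightarrow> (nat \<Rightarrow> nat) \<Rightarrow> bool" where
  "isoemb k H G f \<longleftrightarrow> (\<forall>u<k. \<forall>v<k. H u v = G (f u) (f v))"

definition Emb :: "nat \<Rightarrow> nat \<Rightarrow> (nat \<Rightarrow> nat) set" where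
  "Emb k n = {f \<in> {0..<k} \<rightarrow>\<^sub>E {0..<n}. inj_on f {0..<k}}"

lemma finite_Emb: "finite (Emb k n)"
proof -
  have "Emb k n \<subseteq> {0..<k} \<rightarrow>\<^sub>E {0..<n}" by (auto simp: Emb_def)
  then show ?thesis by (rule finite_subset) (auto intro: finite_PiE)
qed

lemma finite_Aut: "finite (Aut k H)"
  unfolding Aut_def by (rule finite_subset[OF _ finite_permutations[of "{0..<k}"]]) auto

lemma id_Aut: "id \<in> Aut k H"
  unfolding Aut_def by (auto simp: permutes_id)

lemma card_Aut_pos: "card (Aut k H) > 0"
  using finite_Aut id_Aut by (metis card_gt_0_iff empty_iff)

lemma density_cnt: "density k H n G = real (cnt k H n G) / real (n choose k)"
  unfolding density_def cnt_def by simp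

lemma fiber_le_Aut:
  "card {f \<in> Emb k n. isoemb k H G f \<and> f ` {0..<k} = S} \<le> card (Aut k H)"
proof (cases "{f \<in> Emb k n. isoemb k H G f \<and> f ` {0..<k} = S} = {}")
  case True then show ?thesis by (metis card.empty zero_le)
next
  case False
  let ?M = "{f \<in> Emb k n. isoemb k H G f \<and> f ` {0..<k} = S}"
  from False obtain f0 where f0: "f0 \<in> ?M" by blast
  have f0inj: "inj_on f0 {0..<k}" using f0 by (auto simp: Emb_def)
  have f0bij: "bij_betw f0 {0..<k} S" using f0 f0inj by (auto simp: bij_betw_def)
  define \<phi> where "\<phi> f = (\<lambda>x. if x < k then inv_into {0..<k} f0 (f x) else x)" for f :: "nat \<Rightarrow> nat"
  have key: "f0 (\<phi> f x) = f x" "\<phi> f x < k" if "f \<in> ?M" "x < k" for f x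
  proof -
    have fx: "f x \<in> f0 ` {0..<k}" using that f0 by auto
    have "inv_into {0..<k} f0 (f x) \<in> {0..<k}" by (rule inv_into_into[OF fx])
    then show "f0 (\<phi> f x) = f x" "\<phi> f x < k" using that fx
      by (auto simp: \<phi>_def f_inv_into_f)
  qed
  have "inj_on \<phi> ?M"
  proof (rule inj_onI)
    fix f g assume fg: "f \<in> ?M" "g \<in> ?M" "\<phi> f = \<phi> g"
    show "f = g"
    proof
      fix x show "f x = g x"
      proof (cases "x < k")
        case True then show ?thesis using key[OF fg(1) True] key[OF fg(2) True] fg(3) by metis
      next
        case False then show ?thesis using fg(1,2) by (auto simp: Emb_def PiE_def extensional_def)
      qed
    qed
  qed
  moreover have "\<phi> ` ?M \<subseteq> Aut k H"
  proof
    fix p assume "p \<in> \<phi> ` ?M"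
    then obtain f where f: "f \<in> ?M" and p: "p = \<phi> f" by blast
    have fbij: "bij_betw f {0..<k} S" using f by (auto simp: bij_betw_def Emb_def)
    have "bij_betw (inv_into {0..<k} f0 \<circ> f) {0..<k} {0..<k}"
      using bij_betw_trans[OF fbij bij_betw_inv_into[OF f0bij]] .
    then have "bij_betw p {0..<k} {0..<k}"
      by (rule bij_betw_cong[THEN iffD1, rotated]) (auto simp: p \<phi>_def)
    then have perm: "p permutes {0..<k}"
      by (rule bij_imp_permutes) (auto simp: p \<phi>_def)
    have "H u v = H (p u) (p v)" if "u < k" "v < k" for u v
    proof -
      have "H (p u) (p v) = G (f0 (p u)) (f0 (p v))"
        using f0 key[OF f that(1)] key[OF f that(2)] by (auto simp: isoemb_def p)
      also have "\<dots> = G (f u) (f v)" using key[OF f that(1)] key[OF f that(2)] by (simp add: p)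
      also have "\<dots> = H u v" using f that by (auto simp: isoemb_def)
      finally show ?thesis by simp
    qed
    then show "p \<in> Aut k H" using perm by (auto simp: Aut_def)
  qed
  ultimately show ?thesis
    by (metis (no_types, lifting) card_inj_on_le finite_Aut)
qed

lemma emb_le_cnt:
  "card {f \<in> Emb k n. isoemb k H G f} \<le> card (Aut k H) * cnt k H n G"
proof -
  let ?C = "{S. S \<subseteq> {0..<n} \<and> card S = k \<and> induces_copy k H G S}"
  have finC: "finite ?C" by (rule finite_subset[of _ "Pow {0..<n}"]) auto
  have "{f \<in> Emb k n. isoemb k H G f} \<subseteq> (\<Union>S\<in>?C. {f \<in> Emb k n. isoemb k H G f \<and> f ` {0..<k} = S})"
  proof
    fix f assume f: "f \<in> {f \<in> Emb k n. isoemb k H G f}"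
    let ?S = "f ` {0..<k}"
    have inj: "inj_on f {0..<k}" using f by (auto simp: Emb_def)
    have "?S \<subseteq> {0..<n}" using f by (auto simp: Emb_def)
    moreover have "card ?S = k" using card_image[OF inj] by simp
    moreover have "induces_copy k H G ?S"
      unfolding induces_copy_def using f inj by (auto simp: bij_betw_def isoemb_def)
    ultimately show "f \<in> (\<Union>S\<in>?C. {f \<in> Emb k n. isoemb k H G f \<and> f ` {0..<k} = S})"
      using f by blast
  qed
  then have "card {f \<in> Emb k n. isoemb k H G f} \<le> card (\<Union>S\<in>?C. {f \<in> Emb k n. isoemb k H G f \<and> f ` {0..<k} = S})"
    by (intro card_mono) (auto intro!: finite_UN_I finC finite_subset[OF _ finite_Emb])
  also have "\<dots> \<le> (\<Sum>S\<in>?C. card {f \<in> Emb k n. isoemb k H G f \<and> f ` {0..<k} = S})"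
    by (rule card_UN_le[OF finC])
  also have "\<dots> \<le> (\<Sum>S\<in>?C. card (Aut k H))"
    by (intro sum_mono fiber_le_Aut)
  also have "\<dots> = card (Aut k H) * cnt k H n G" by (simp add: cnt_def)
  finally show ?thesis .
qed

lemma pairs_card:
  fixes S :: "nat set"
  assumes "finite S"
  shows "card {(x,y). x \<in> S \<and> y \<in> S \<and> x < y} = card S choose 2"
proof -
  have "bij_betw (\<lambda>(x,y). {x,y}) {(x,y). x \<in> S \<and> y \<in> S \<and> x < y} {T. T \<subseteq> S \<and> card T = 2}"
  proof (rule bij_betwI')
    fix p q assume "p \<in> {(x,y). x \<in> S \<and> y \<in> S \<and> x < y}" "q \<in> {(x,y). x \<in> S \<and> y \<in> S \<and> x < y}"
    then show "((case p of (x, y) \<Rightarrow> {x, y}) = (case q of (x, y) \<Rightarrow> {x, y})) = (p = q)"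
      by (cases p; cases q) (auto simp: doubleton_eq_iff)
  next
    fix p assume "p \<in> {(x,y). x \<in> S \<and> y \<in> S \<and> x < y}"
    then show "(case p of (x, y) \<Rightarrow> {x, y}) \<in> {T. T \<subseteq> S \<and> card T = 2}" by auto
  next
    fix T assume "T \<in> {T. T \<subseteq> S \<and> card T = 2}"
    then obtain x y where T: "T = {x,y}" "x \<noteq> y" "T \<subseteq> S" by (auto simp: card_2_iff)
    show "\<exists>p\<in>{(x,y). x \<in> S \<and> y \<in> S \<and> x < y}. T = (case p of (x, y) \<Rightarrow> {x, y})"
    proof (cases "x < y")
      case True then show ?thesis using T by (intro bexI[of _ "(x,y)"]) auto
    next
      case False then show ?thesis using T by (intro bexI[of _ "(y,x)"]) auto
    qed
  qed
  from bij_betw_same_card[OF this] show ?thesis by (simp add: n_subsets[OF assms])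
qed

definition ffr :: "nat \<Rightarrow> nat \<Rightarrow> real" where
  "ffr m t = (\<Prod>i = 0..<t. real m - real i)"

lemma binom_ffr: "real (m choose t) * fact t = ffr m t"
  unfolding ffr_def binomial_gbinomial gbinomial_mult_fact' by simp

definition DL :: "nat \<Rightarrow> nat set \<Rightarrow> nat list set" where
  "DL t A = {xs. length xs = t \<and> distinct xs \<and> set xs \<subseteq> A}"

lemma card_DL:
  fixes A :: "nat set" and t :: nat
  assumes "finite A"
  shows "real (card (DL t A)) = ffr (card A) t"
proof (cases "t \<le> card A")
  case True
  have c: "card (DL t A) = \<Prod>{card A - t + 1 .. card A}"
    unfolding DL_def by (rule card_lists_distinct_length_eq[OF assms True])
  have f1: "(fact (card A) :: nat) = fact (card A - t) * \<Prod>{Suc (card A - t)..card A}"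
    by (rule fact_eq_fact_times) simp
  have f2: "(fact t * fact (card A - t) * (card A choose t) :: nat) = fact (card A)"
    by (rule binomial_fact_lemma[OF True])
  have "\<Prod>{card A - t + 1 .. card A} = fact t * (card A choose t)"
    using f1 f2 by (simp add: algebra_simps)
  then have "real (card (DL t A)) = real (fact t * (card A choose t))"
    by (simp add: c)
  then have "real (card (DL t A)) = real (card A choose t) * fact t"
    by simp
  then show ?thesis using binom_ffr by simp
next
  case False
  have "DL t A = {}"
  proof (rule ccontr)
    assume "DL t A \<noteq> {}"
    then obtain xs where "length xs = t" "distinct xs" "set xs \<subseteq> A" by (auto simp: DL_def)
    then have "t \<le> card A" using card_mono[OF assms] distinct_card by metis
    then show False using False by simp
  qed
  moreover have "ffr (card A) t = 0"
    unfolding ffr_def using False by (intro prod_zero) (auto intro!: bexI[of _ "card A"])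
  ultimately show ?thesis by simp
qed

definition P :: "nat \<Rightarrow> nat \<Rightarrow> (nat \<times> nat) set" where
  "P a n = {(x,y). x < y \<and> y < n \<and> (x < a \<longleftrightarrow> y < a)}"

definition Us :: "nat \<Rightarrow> (nat \<times> nat) set \<Rightarrow> nat \<Rightarrow> nat \<Rightarrow> bool" where
  "Us a \<sigma> u v \<longleftrightarrow> (u < a \<and> a \<le> v) \<or> ((u < a \<longleftrightarrow> v < a) \<and> ((u < v \<and> (u,v) \<in> \<sigma>) \<or> (v < u \<and> (v,u) \<notin> \<sigma>)))"

definition dominating :: "nat \<Rightarrow> (nat \<Rightarrow> nat \<Rightarrow> bool) \<Rightarrow> nat set \<Rightarrow> bool" where
  "dominating k H B \<longleftrightarrow> B \<subseteq> {0..<k} \<and> (\<forall>u\<in>B. \<forall>v<k. v \<notin> B \<longrightarrow> H u v)"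

definition EB :: "nat \<Rightarrow> nat \<Rightarrow> nat \<Rightarrow> nat set \<Rightarrow> (nat \<Rightarrow> nat) set" where
  "EB k n a B = {f \<in> Emb k n. \<forall>u<k. (f u < a) = (u \<in> B)}"

lemma finite_P: "finite (P a n)"
  by (rule finite_subset[of _ "{0..<n} \<times> {0..<n}"]) (auto simp: P_def)

lemma sigma_count:
  assumes tH: "tournament k H" and dom: "dominating k H B" and f: "f \<in> EB k n a B"
  shows "2 ^ card (P a n) / 2 ^ ((card B choose 2) + ((k - card B) choose 2))
           \<le> real (card {\<sigma> \<in> Pow (P a n). isoemb k H (Us a \<sigma>) f})"
proof -
  let ?F = "f ` {0..<k}"
  define Pf where "Pf = {(x,y) \<in> P a n. x \<in> ?F \<and> y \<in> ?F}"
  define \<tau> where "\<tau> = {(x,y) \<in> Pf. \<exists>u<k. \<exists>v<k. x = f u \<and> y = f v \<and> H u v}"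
  have finj: "inj_on f {0..<k}" and fk: "\<And>u. u < k \<Longrightarrow> (f u < a) = (u \<in> B)"
    using f by (auto simp: EB_def Emb_def)
  have Bk: "B \<subseteq> {0..<k}" using dom by (auto simp: dominating_def)
  have Hirr: "\<And>u. u < k \<Longrightarrow> \<not> H u u" using tH unfolding tournament_def by blast
  have Hasym: "\<And>u v. u < k \<Longrightarrow> v < k \<Longrightarrow> u \<noteq> v \<Longrightarrow> H u v = (\<not> H v u)"
    using tH unfolding tournament_def by blast
  have Pf_sub: "Pf \<subseteq> P a n" by (auto simp: Pf_def)
  have \<tau>_sub: "\<tau> \<subseteq> Pf" by (auto simp: \<tau>_def)
  have iso: "isoemb k H (Us a (\<rho> \<union> \<tau>)) f" if \<rho>: "\<rho> \<subseteq> P a n - Pf" for \<rho>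
    unfolding isoemb_def
  proof (intro allI impI)
    fix u v assume u: "u < k" and v: "v < k"
    show "H u v = Us a (\<rho> \<union> \<tau>) (f u) (f v)"
    proof (cases "u = v")
      case True then show ?thesis using Hirr u by (simp add: Us_def)
    next
      case False
      then have fne: "f u \<noteq> f v" using finj u v by (auto simp: inj_on_def)
      have mem: "(f x, f y) \<in> \<rho> \<union> \<tau> \<longleftrightarrow> H x y" if "x < k" "y < k" "f x < f y" "(f x < a) = (f y < a)" for x y
      proof -
        have "f y < n" using f that by (auto simp: EB_def Emb_def PiE_def)
        then have inPf: "(f x, f y) \<in> Pf" using that by (auto simp: Pf_def P_def)
        then have "(f x, f y) \<notin> \<rho>" using \<rho> by auto
        moreover have "(f x, f y) \<in> \<tau> \<longleftrightarrow> H x y"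
        proof
          assume "(f x, f y) \<in> \<tau>"
          then obtain x' y' where "x' < k" "y' < k" "f x = f x'" "f y = f y'" "H x' y'" by (auto simp: \<tau>_def)
          then have "x' = x" "y' = y" using finj that(1,2) by (auto simp: inj_on_def)
          then show "H x y" using \<open>H x' y'\<close> by simp
        next
          assume "H x y" then show "(f x, f y) \<in> \<tau>" using inPf that by (auto simp: \<tau>_def)
        qed
        ultimately show ?thesis by auto
      qed
      consider "f u < a" "\<not> f v < a" | "\<not> f u < a" "f v < a" | "(f u < a) = (f v < a)" "f u < f v"
        | "(f u < a) = (f v < a)" "f v < f u" using fne by linarith
      then show ?thesis
      proof cases
        case 1
        then have "u \<in> B" "v \<notin> B" using fk u v by auto
        then have "H u v" using dom v by (auto simp: dominating_def)
        then show ?thesis using 1 by (simp add: Us_def)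
      next
        case 2
        then have "v \<in> B" "u \<notin> B" using fk u v by auto
        then have "H v u" using dom u by (auto simp: dominating_def)
        then have "\<not> H u v" using Hasym[OF u v False] by blast
        then show ?thesis using 2 by (simp add: Us_def)
      next
        case 3
        then show ?thesis using mem[OF u v] by (auto simp: Us_def)
      next
        case 4
        then have "(f v, f u) \<in> \<rho> \<union> \<tau> \<longleftrightarrow> H v u" using mem[OF v u] by auto
        moreover have "H u v = (\<not> H v u)" using Hasym[OF u v False] by blast
        ultimately show ?thesis using 4 by (auto simp: Us_def)
      qed
    qed
  qed
  have inj: "inj_on (\<lambda>\<rho>. \<rho> \<union> \<tau>) (Pow (P a n - Pf))"
  proof (rule inj_onI)
    fix r1 r2 assume "r1 \<in> Pow (P a n - Pf)" "r2 \<in> Pow (P a n - Pf)" "r1 \<union> \<tau> = r2 \<union> \<tau>"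
    then show "r1 = r2" using \<tau>_sub by blast
  qed
  have img: "(\<lambda>\<rho>. \<rho> \<union> \<tau>) ` Pow (P a n - Pf) \<subseteq> {\<sigma> \<in> Pow (P a n). isoemb k H (Us a \<sigma>) f}"
    using iso \<tau>_sub Pf_sub by auto
  have c1: "card (Pow (P a n - Pf)) \<le> card {\<sigma> \<in> Pow (P a n). isoemb k H (Us a \<sigma>) f}"
    using card_inj_on_le[OF inj img] finite_P by auto
  have cPow: "card (Pow (P a n - Pf)) = 2 ^ (card (P a n) - card Pf)"
    using finite_P Pf_sub by (simp add: card_Pow card_Diff_subset finite_subset)
  have PfU: "Pf \<subseteq> {(x,y). x \<in> f ` B \<and> y \<in> f ` B \<and> x < y} \<union> {(x,y). x \<in> f ` ({0..<k} - B) \<and> y \<in> f ` ({0..<k} - B) \<and> x < y}"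
  proof
    fix p assume "p \<in> Pf"
    then obtain x y where p: "p = (x,y)" "x < y" "(x < a) = (y < a)" "x \<in> ?F" "y \<in> ?F"
      by (auto simp: Pf_def P_def)
    then obtain u v where uv: "u < k" "v < k" "x = f u" "y = f v" by auto
    show "p \<in> {(x,y). x \<in> f ` B \<and> y \<in> f ` B \<and> x < y} \<union> {(x,y). x \<in> f ` ({0..<k} - B) \<and> y \<in> f ` ({0..<k} - B) \<and> x < y}"
    proof (cases "x < a")
      case True
      then have "u \<in> B" "v \<in> B" using fk uv p by auto
      then show ?thesis using p uv by auto
    next
      case False
      then have "u \<notin> B" "v \<notin> B" using fk uv p by auto
      then show ?thesis using p uv by auto
    qed
  qed
  have fin1: "finite (f ` B)" "finite (f ` ({0..<k} - B))" using finite_subset[OF Bk] by auto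
  have cB: "card (f ` B) = card B" using card_image[OF inj_on_subset[OF finj Bk]] .
  have cC: "card (f ` ({0..<k} - B)) = k - card B"
    using card_image[OF inj_on_subset[OF finj, of "{0..<k} - B"]] Bk
    by (simp add: card_Diff_subset finite_subset)
  have "card Pf \<le> card {(x,y). x \<in> f ` B \<and> y \<in> f ` B \<and> x < y} + card {(x,y). x \<in> f ` ({0..<k} - B) \<and> y \<in> f ` ({0..<k} - B) \<and> x < y}"
  proof -
    have fa: "finite {(x,y). x \<in> f ` B \<and> y \<in> f ` B \<and> x < y}"
      by (rule finite_subset[of _ "f ` B \<times> f ` B"]) (use fin1 in auto)
    have fb: "finite {(x,y). x \<in> f ` ({0..<k} - B) \<and> y \<in> f ` ({0..<k} - B) \<and> x < y}"
      by (rule finite_subset[of _ "f ` ({0..<k} - B) \<times> f ` ({0..<k} - B)"]) (use fin1 in auto)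
    show ?thesis using card_mono[OF finite_UnI[OF fa fb] PfU] card_Un_le le_trans by blast
  qed
  then have cPf: "card Pf \<le> (card B choose 2) + ((k - card B) choose 2)"
    using pairs_card[OF fin1(1)] pairs_card[OF fin1(2)] cB cC by simp
  have cPfP: "card Pf \<le> card (P a n)" using card_mono[OF finite_P Pf_sub] .
  have "(2::real) ^ card (P a n) / 2 ^ ((card B choose 2) + ((k - card B) choose 2))
        \<le> 2 ^ card (P a n) / 2 ^ card Pf"
    using cPf by (intro divide_left_mono) (auto intro: power_increasing)
  also have "\<dots> = 2 ^ (card (P a n) - card Pf)"
    using cPfP by (simp add: power_diff)
  also have "\<dots> = real (card (Pow (P a n - Pf)))" using cPow by simp
  also have "\<dots> \<le> real (card {\<sigma> \<in> Pow (P a n). isoemb k H (Us a \<sigma>) f})" using c1 by simp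
  finally show ?thesis .
qed

lemma nth_mem_in: "i < length xs \<Longrightarrow> set xs \<subseteq> A \<Longrightarrow> xs ! i \<in> A"
  by (meson nth_mem subsetD)

lemma EB_card:
  assumes Bk: "B \<subseteq> {0..<k}" and an: "a \<le> n"
  shows "ffr a (card B) * ffr (n - a) (k - card B) \<le> real (card (EB k n a B))"
proof -
  define C where "C = {0..<k} - B"
  define LB where "LB = sorted_list_of_set B"
  define LC where "LC = sorted_list_of_set C"
  have finB: "finite B" using Bk finite_subset by blast
  have finC: "finite C" by (simp add: C_def)
  have LB: "length LB = card B" "distinct LB" "set LB = B" using finB by (auto simp: LB_def)
  have cardC: "card C = k - card B" using Bk finB by (simp add: C_def card_Diff_subset)
  have LC: "length LC = k - card B" "distinct LC" "set LC = C" using finC cardC by (auto simp: LC_def)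
  define D where "D = DL (card B) {0..<a} \<times> DL (k - card B) {a..<n}"
  define mg where "mg = (\<lambda>(ys::nat list, zs::nat list). restrict (\<lambda>u. if u \<in> B then the (map_of (zip LB ys) u) else the (map_of (zip LC zs) u)) {0..<k})"
  have mgB: "mg (ys,zs) (LB ! i) = ys ! i" if "(ys,zs) \<in> D" "i < card B" for ys zs i
  proof -
    have "LB ! i \<in> B" using LB that(2) nth_mem by metis
    then have "LB ! i < k" using Bk by auto
    moreover have "map_of (zip LB ys) (LB ! i) = Some (ys ! i)"
      using that LB by (intro map_of_zip_nth) (auto simp: D_def DL_def)
    ultimately show ?thesis using \<open>LB ! i \<in> B\<close> by (simp add: mg_def)
  qed
  have mgC: "mg (ys,zs) (LC ! i) = zs ! i" if "(ys,zs) \<in> D" "i < k - card B" for ys zs i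
  proof -
    have "LC ! i \<in> C" using LC that(2) nth_mem by metis
    then have "LC ! i < k" "LC ! i \<notin> B" by (auto simp: C_def)
    moreover have "map_of (zip LC zs) (LC ! i) = Some (zs ! i)"
      using that LC by (intro map_of_zip_nth) (auto simp: D_def DL_def)
    ultimately show ?thesis by (simp add: mg_def)
  qed
  have inj: "inj_on mg D"
  proof (rule inj_onI)
    fix p q assume p: "p \<in> D" and q: "q \<in> D" and e: "mg p = mg q"
    obtain ys zs where ps: "p = (ys,zs)" by fastforce
    obtain ys' zs' where qs: "q = (ys',zs')" by fastforce
    have "ys = ys'"
    proof (rule nth_equalityI)
      show "length ys = length ys'" using p q ps qs by (auto simp: D_def DL_def)
      fix i assume "i < length ys"
      then have i: "i < card B" using p ps by (auto simp: D_def DL_def)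
      show "ys ! i = ys' ! i" using mgB[OF p[unfolded ps] i] mgB[OF q[unfolded qs] i] e ps qs by simp
    qed
    moreover have "zs = zs'"
    proof (rule nth_equalityI)
      show "length zs = length zs'" using p q ps qs by (auto simp: D_def DL_def)
      fix i assume "i < length zs"
      then have i: "i < k - card B" using p ps by (auto simp: D_def DL_def)
      show "zs ! i = zs' ! i" using mgC[OF p[unfolded ps] i] mgC[OF q[unfolded qs] i] e ps qs by simp
    qed
    ultimately show "p = q" using ps qs by simp
  qed
  have val: "(u \<in> B \<longrightarrow> (\<exists>i < card B. u = LB ! i \<and> mg p u = fst p ! i \<and> mg p u < a)) \<and>
             (u \<notin> B \<longrightarrow> (\<exists>i < k - card B. u = LC ! i \<and> mg p u = snd p ! i \<and> a \<le> mg p u \<and> mg p u < n))"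
    if p: "p \<in> D" and u: "u < k" for p u
  proof -
    obtain ys zs where ps: "p = (ys,zs)" by fastforce
    have ys: "length ys = card B" "set ys \<subseteq> {0..<a}" and zs: "length zs = k - card B" "set zs \<subseteq> {a..<n}"
      using p ps by (auto simp: D_def DL_def)
    show ?thesis
    proof (intro conjI impI)
      assume uB: "u \<in> B"
      then obtain i where i: "i < card B" "u = LB ! i" using LB by (metis in_set_conv_nth)
      then have "mg p u = ys ! i" using mgB p ps by simp
      moreover have "ys ! i < a" using nth_mem_in[of i ys "{0..<a}"] ys i by auto
      ultimately show "\<exists>i < card B. u = LB ! i \<and> mg p u = fst p ! i \<and> mg p u < a" using i ps by auto
    next
      assume uB: "u \<notin> B"
      then have "u \<in> C" using u by (auto simp: C_def)
      then obtain i where i: "i < k - card B" "u = LC ! i" using LC by (metis in_set_conv_nth)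
      then have "mg p u = zs ! i" using mgC p ps by simp
      moreover have "zs ! i \<in> {a..<n}" using nth_mem_in[of i zs "{a..<n}"] zs i by auto
      ultimately show "\<exists>i < k - card B. u = LC ! i \<and> mg p u = snd p ! i \<and> a \<le> mg p u \<and> mg p u < n"
        using i ps by auto
    qed
  qed
  have img: "mg ` D \<subseteq> EB k n a B"
  proof
    fix f assume "f \<in> mg ` D"
    then obtain p where p: "p \<in> D" and f: "f = mg p" by blast
    obtain ys zs where ps: "p = (ys,zs)" by fastforce
    have dys: "distinct ys" and dzs: "distinct zs" using p ps by (auto simp: D_def DL_def)
    have ext: "f \<in> extensional {0..<k}" by (simp add: f mg_def ps)
    have rng: "f u \<in> {0..<n}" if "u < k" for u
      using val[OF p that] an by (cases "u \<in> B") (auto simp: f)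
    have side: "(f u < a) = (u \<in> B)" if "u < k" for u
      using val[OF p that] by (cases "u \<in> B") (auto simp: f)
    have "inj_on f {0..<k}"
    proof (rule inj_onI)
      fix u v assume u: "u \<in> {0..<k}" and v: "v \<in> {0..<k}" and e: "f u = f v"
      show "u = v"
      proof (cases "u \<in> B")
        case True
        then have "f u < a" using side u by auto
        then have vB: "v \<in> B" using side v e by auto
        have uk: "u < k" using u by simp
        obtain i where i: "i < card B" "u = LB ! i" "mg p u = ys ! i" using val[OF p uk] True ps by auto
        have vk: "v < k" using v by simp
        obtain i' where i': "i' < card B" "v = LB ! i'" "mg p v = ys ! i'" using val[OF p vk] vB ps by auto
        have "length ys = card B" using p ps by (auto simp: D_def DL_def)
        then have "i = i'" using e f i i' dys nth_eq_iff_index_eq by metis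
        then show ?thesis using i i' by simp
      next
        case False
        then have "\<not> f u < a" using side u by auto
        then have vB: "v \<notin> B" using side v e by auto
        have uk: "u < k" using u by simp
        obtain i where i: "i < k - card B" "u = LC ! i" "mg p u = zs ! i" using val[OF p uk] False ps by auto
        have vk: "v < k" using v by simp
        obtain i' where i': "i' < k - card B" "v = LC ! i'" "mg p v = zs ! i'" using val[OF p vk] vB ps by auto
        have "length zs = k - card B" using p ps by (auto simp: D_def DL_def)
        then have "i = i'" using e f i i' dzs nth_eq_iff_index_eq by metis
        then show ?thesis using i i' by simp
      qed
    qed
    moreover have "f \<in> {0..<k} \<rightarrow>\<^sub>E {0..<n}" using ext rng by (auto simp: PiE_def)
    ultimately show "f \<in> EB k n a B" using side by (auto simp: EB_def Emb_def)
  qed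
  have finEB: "finite (EB k n a B)"
    by (rule finite_subset[OF _ finite_Emb[of k n]]) (auto simp: EB_def)
  have "card D \<le> card (EB k n a B)" using card_inj_on_le[OF inj img finEB] .
  moreover have "real (card D) = ffr a (card B) * ffr (n - a) (k - card B)"
    using card_DL[of "{0..<a}" "card B"] card_DL[of "{a..<n}" "k - card B"]
    by (simp add: D_def card_cartesian_product)
  ultimately show ?thesis by simp
qed

lemma card_filter_sum: "finite B \<Longrightarrow> card {y\<in>B. R y} = (\<Sum>y\<in>B. if R y then 1 else 0)"
  by (simp add: sum.inter_filter[symmetric])

lemma sum_swap_card:
  assumes "finite A" "finite B"
  shows "(\<Sum>x\<in>A. card {y \<in> B. R x y}) = (\<Sum>y\<in>B. card {x \<in> A. R x y})"
proof -
  have "(\<Sum>x\<in>A. card {y \<in> B. R x y}) = (\<Sum>x\<in>A. \<Sum>y\<in>B. if R x y then 1 else 0)"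
    using assms by (simp add: card_filter_sum)
  also have "\<dots> = (\<Sum>y\<in>B. \<Sum>x\<in>A. if R x y then 1 else 0)" by (rule sum.swap)
  also have "\<dots> = (\<Sum>y\<in>B. card {x \<in> A. R x y})"
    using assms by (simp add: card_filter_sum)
  finally show ?thesis .
qed

lemma avg_exists:
  fixes g :: "'a \<Rightarrow> real"
  assumes "finite I" "I \<noteq> {}" "real (card I) * M \<le> (\<Sum>i\<in>I. g i)"
  shows "\<exists>i\<in>I. M \<le> g i"
proof (rule ccontr)
  assume "\<not> ?thesis"
  then have "\<And>i. i \<in> I \<Longrightarrow> g i < M" by auto
  then have "(\<Sum>i\<in>I. g i) < (\<Sum>i\<in>I. M)" using assms by (intro sum_strict_mono) auto
  then show False using assms by simp
qed

lemma choose2_split: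
  assumes "j \<le> k"
  shows "k choose 2 = (j choose 2) + ((k - j) choose 2) + j * (k - j)"
proof -
  obtain m where k: "k = j + m" using assms le_Suc_ex by blast
  have "(j + m) choose 2 = (j choose 2) + (m choose 2) + j * m"
  proof (induction m)
    case 0 then show ?case by simp
  next
    case (Suc m)
    have "(j + Suc m) choose 2 = ((j + m) choose 2) + (j + m)"
      by (simp add: numeral_2_eq_2)
    moreover have "Suc m choose 2 = (m choose 2) + m" by (simp add: numeral_2_eq_2)
    ultimately show ?case using Suc by simp
  qed
  then show ?thesis using k by simp
qed

lemma alg: "(N::real) * ((X + Z)/C + Y/D) = N/C*(1*X) + N/D*Y + N/C*(Z*1)"
  by (simp add: algebra_simps add_divide_distrib)

lemma ffr_0: "ffr m 0 = 1" by (simp add: ffr_def)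

lemma dominating_empty: "dominating k H {}" by (simp add: dominating_def)
lemma dominating_all: "dominating k H {0..<k}" by (auto simp: dominating_def)

lemma exists_good_U:
  assumes tH: "tournament k H" and dom: "dominating k H B0" and j: "card B0 = j" "0 < j" "j < k"
    and an: "a \<le> n"
  shows "\<exists>\<sigma>. (ffr (n - a) k + ffr a k) / 2 ^ (k choose 2)
               + ffr a j * ffr (n - a) (k - j) / 2 ^ ((j choose 2) + ((k - j) choose 2))
             \<le> real (card (Aut k H)) * real (cnt k H n (Us a \<sigma>))"
proof -
  define I where "I = Pow (P a n)"
  have finI: "finite I" "I \<noteq> {}" using finite_P by (auto simp: I_def)
  have cardI: "real (card I) = 2 ^ card (P a n)" using finite_P by (simp add: I_def card_Pow)
  define E0 where "E0 = EB k n a {}"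
  define E1 where "E1 = EB k n a B0"
  define E2 where "E2 = EB k n a {0..<k}"
  have B0k: "B0 \<subseteq> {0..<k}" using dom by (auto simp: dominating_def)
  obtain b where b: "b \<in> B0" using j by fastforce
  have ne: "B0 \<noteq> {0..<k}" using j by auto
  obtain c where "c \<in> {0..<k} - B0" using B0k ne by blast
  then have c: "c < k" "c \<notin> B0" by auto
  have finE: "finite E" if "E \<subseteq> Emb k n" for E using finite_subset[OF that finite_Emb] .
  have E_sub: "E0 \<subseteq> Emb k n" "E1 \<subseteq> Emb k n" "E2 \<subseteq> Emb k n" by (auto simp: E0_def E1_def E2_def EB_def)
  have disj: "E0 \<inter> E1 = {}" "(E0 \<union> E1) \<inter> E2 = {}"
  proof -
    show "E0 \<inter> E1 = {}" using b B0k by (auto simp: E0_def E1_def EB_def)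
    show "(E0 \<union> E1) \<inter> E2 = {}" using c j by (auto simp: E0_def E1_def E2_def EB_def)
  qed
  have per\<sigma>: "real (card {f \<in> E0. isoemb k H (Us a \<sigma>) f}) + real (card {f \<in> E1. isoemb k H (Us a \<sigma>) f})
          + real (card {f \<in> E2. isoemb k H (Us a \<sigma>) f})
        \<le> real (card (Aut k H)) * real (cnt k H n (Us a \<sigma>))" for \<sigma>
  proof -
    let ?G = "Us a \<sigma>"
    have "{f \<in> E0. isoemb k H ?G f} \<union> {f \<in> E1. isoemb k H ?G f} \<union> {f \<in> E2. isoemb k H ?G f}
          \<subseteq> {f \<in> Emb k n. isoemb k H ?G f}" using E_sub by auto
    then have "card ({f \<in> E0. isoemb k H ?G f} \<union> {f \<in> E1. isoemb k H ?G f} \<union> {f \<in> E2. isoemb k H ?G f})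
          \<le> card {f \<in> Emb k n. isoemb k H ?G f}"
      by (intro card_mono) (auto intro: finite_subset[OF _ finite_Emb])
    moreover have "card ({f \<in> E0. isoemb k H ?G f} \<union> {f \<in> E1. isoemb k H ?G f} \<union> {f \<in> E2. isoemb k H ?G f})
       = card {f \<in> E0. isoemb k H ?G f} + card {f \<in> E1. isoemb k H ?G f} + card {f \<in> E2. isoemb k H ?G f}"
    proof -
      have f0: "finite {f \<in> E0. isoemb k H ?G f}" "finite {f \<in> E1. isoemb k H ?G f}" "finite {f \<in> E2. isoemb k H ?G f}"
        using E_sub finE by auto
      have d1: "{f \<in> E0. isoemb k H ?G f} \<inter> {f \<in> E1. isoemb k H ?G f} = {}" using disj by blast
      have d2: "({f \<in> E0. isoemb k H ?G f} \<union> {f \<in> E1. isoemb k H ?G f}) \<inter> {f \<in> E2. isoemb k H ?G f} = {}"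
        using disj by blast
      show ?thesis using card_Un_disjoint[OF finite_UnI[OF f0(1) f0(2)] f0(3) d2] card_Un_disjoint[OF f0(1) f0(2) d1]
        by simp
    qed
    ultimately have "card {f \<in> E0. isoemb k H ?G f} + card {f \<in> E1. isoemb k H ?G f} + card {f \<in> E2. isoemb k H ?G f}
        \<le> card (Aut k H) * cnt k H n ?G" using emb_le_cnt[of k n H ?G] by linarith
    then show ?thesis by (simp only: of_nat_add[symmetric] of_nat_mult[symmetric] of_nat_le_iff)
  qed
  have sumE: "2 ^ card (P a n) / 2 ^ ((card B choose 2) + ((k - card B) choose 2)) * (ffr a (card B) * ffr (n - a) (k - card B))
      \<le> (\<Sum>\<sigma>\<in>I. real (card {f \<in> EB k n a B. isoemb k H (Us a \<sigma>) f}))"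
    if dB: "dominating k H B" for B
  proof -
    have Bk: "B \<subseteq> {0..<k}" using dB by (auto simp: dominating_def)
    have fEB: "finite (EB k n a B)" by (rule finE) (auto simp: EB_def)
    have "(\<Sum>\<sigma>\<in>I. real (card {f \<in> EB k n a B. isoemb k H (Us a \<sigma>) f}))
        = real (\<Sum>\<sigma>\<in>I. card {f \<in> EB k n a B. isoemb k H (Us a \<sigma>) f})" by simp
    also have "(\<Sum>\<sigma>\<in>I. card {f \<in> EB k n a B. isoemb k H (Us a \<sigma>) f})
        = (\<Sum>f\<in>EB k n a B. card {\<sigma> \<in> I. isoemb k H (Us a \<sigma>) f})"
      by (rule sum_swap_card[OF finI(1) fEB])
    finally have eq: "(\<Sum>\<sigma>\<in>I. real (card {f \<in> EB k n a B. isoemb k H (Us a \<sigma>) f}))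
        = (\<Sum>f\<in>EB k n a B. real (card {\<sigma> \<in> I. isoemb k H (Us a \<sigma>) f}))" by simp
    define X :: real where "X = 2 ^ card (P a n) / 2 ^ ((card B choose 2) + ((k - card B) choose 2))"
    have X0: "0 \<le> X" unfolding X_def by (intro divide_nonneg_nonneg zero_le_power) simp_all
    have "X * (ffr a (card B) * ffr (n - a) (k - card B)) \<le> X * real (card (EB k n a B))"
      by (rule mult_left_mono[OF EB_card[OF Bk an] X0])
    also have "\<dots> = (\<Sum>f\<in>EB k n a B. X)" by (simp only: sum_constant mult.commute)
    also have "\<dots> \<le> (\<Sum>f\<in>EB k n a B. real (card {\<sigma> \<in> I. isoemb k H (Us a \<sigma>) f}))"
      unfolding I_def X_def by (intro sum_mono sigma_count[OF tH dB])
    also have "\<dots> = (\<Sum>\<sigma>\<in>I. real (card {f \<in> EB k n a B. isoemb k H (Us a \<sigma>) f}))"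
      using eq by simp
    finally show ?thesis unfolding X_def .
  qed
  have z02: "(0::nat) choose 2 = 0" by (simp add: numeral_2_eq_2)
  note s0 = sumE[OF dominating_empty]
  note s1 = sumE[OF dom]
  note s2 = sumE[OF dominating_all]
  define R where "R = (ffr (n - a) k + ffr a k) / 2 ^ (k choose 2)
               + ffr a j * ffr (n - a) (k - j) / 2 ^ ((j choose 2) + ((k - j) choose 2))"
  have "real (card I) * R
      = 2 ^ card (P a n) / 2 ^ ((card ({}::nat set) choose 2) + ((k - card ({}::nat set)) choose 2)) * (ffr a (card ({}::nat set)) * ffr (n - a) (k - card ({}::nat set)))
      + 2 ^ card (P a n) / 2 ^ ((card B0 choose 2) + ((k - card B0) choose 2)) * (ffr a (card B0) * ffr (n - a) (k - card B0))
      + 2 ^ card (P a n) / 2 ^ ((card {0..<k} choose 2) + ((k - card {0..<k}) choose 2)) * (ffr a (card {0..<k}) * ffr (n - a) (k - card {0..<k}))"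
    by (simp add: cardI R_def j(1) ffr_0 alg z02)
  also have "\<dots> \<le> (\<Sum>\<sigma>\<in>I. real (card {f \<in> E0. isoemb k H (Us a \<sigma>) f}))
             + (\<Sum>\<sigma>\<in>I. real (card {f \<in> E1. isoemb k H (Us a \<sigma>) f}))
             + (\<Sum>\<sigma>\<in>I. real (card {f \<in> E2. isoemb k H (Us a \<sigma>) f}))"
    using s0 s1 s2 unfolding E0_def E1_def E2_def by linarith
  also have "\<dots> = (\<Sum>\<sigma>\<in>I. real (card {f \<in> E0. isoemb k H (Us a \<sigma>) f}) + real (card {f \<in> E1. isoemb k H (Us a \<sigma>) f})
          + real (card {f \<in> E2. isoemb k H (Us a \<sigma>) f}))"
    by (simp add: sum.distrib)
  also have "\<dots> \<le> (\<Sum>\<sigma>\<in>I. real (card (Aut k H)) * real (cnt k H n (Us a \<sigma>)))"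
    by (intro sum_mono per\<sigma>)
  finally obtain \<sigma> where "R \<le> real (card (Aut k H)) * real (cnt k H n (Us a \<sigma>))"
    using avg_exists[OF finI] by blast
  then show ?thesis unfolding R_def by blast
qed

definition inclass :: "nat \<Rightarrow> nat \<Rightarrow> (nat \<Rightarrow> nat \<Rightarrow> bool) \<Rightarrow> bool" where
  "inclass a n G \<longleftrightarrow> (\<forall>u v. u < a \<longrightarrow> a \<le> v \<longrightarrow> v < n \<longrightarrow> G u v)"

lemma tD: "tournament n G \<Longrightarrow> u < n \<Longrightarrow> v < n \<Longrightarrow> G u v \<Longrightarrow> \<not> G v u"
  unfolding tournament_def by blast
lemma tD2: "tournament n G \<Longrightarrow> u < n \<Longrightarrow> v < n \<Longrightarrow> u \<noteq> v \<Longrightarrow> \<not> G u v \<Longrightarrow> G v u"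
  unfolding tournament_def by blast
lemma tD0: "tournament n G \<Longrightarrow> u < n \<Longrightarrow> \<not> G u u"
  unfolding tournament_def by blast
lemma tI: "(\<And>u. u < n \<Longrightarrow> \<not> G u u) \<Longrightarrow> (\<And>u v. u < n \<Longrightarrow> v < n \<Longrightarrow> u \<noteq> v \<Longrightarrow> G u v \<Longrightarrow> \<not> G v u)
   \<Longrightarrow> (\<And>u v. u < n \<Longrightarrow> v < n \<Longrightarrow> u \<noteq> v \<Longrightarrow> \<not> G u v \<Longrightarrow> G v u) \<Longrightarrow> tournament n G"
  unfolding tournament_def by blast

lemma induces_copy_cong:
  assumes "\<And>u v. u \<in> S \<Longrightarrow> v \<in> S \<Longrightarrow> G u v = G' u v"
  shows "induces_copy k H G S = induces_copy k H G' S"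
proof -
  have "(\<forall>u<k. \<forall>v<k. H u v \<longleftrightarrow> G (f u) (f v)) = (\<forall>u<k. \<forall>v<k. H u v \<longleftrightarrow> G' (f u) (f v))"
    if "bij_betw f {0..<k} S" for f
  proof -
    have "\<And>u. u < k \<Longrightarrow> f u \<in> S" using that by (auto simp: bij_betw_def)
    then show ?thesis using assms by auto
  qed
  then show ?thesis unfolding induces_copy_def by blast
qed

lemma cnt_cong:
  assumes "\<And>u v. u < n \<Longrightarrow> v < n \<Longrightarrow> G u v = G' u v"
  shows "cnt k H n G = cnt k H n G'"
proof -
  have "{S. S \<subseteq> {0..<n} \<and> card S = k \<and> induces_copy k H G S} = {S. S \<subseteq> {0..<n} \<and> card S = k \<and> induces_copy k H G' S}"
  proof (intro Collect_cong conj_cong refl)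
    fix S assume "S \<subseteq> {0..<n}"
    then show "induces_copy k H G S = induces_copy k H G' S"
      by (intro induces_copy_cong assms) auto
  qed
  then show ?thesis by (simp add: cnt_def)
qed

lemma card_containing:
  assumes "t < n" "1 \<le> k"
  shows "card {S. S \<subseteq> {0..<n} \<and> card S = k \<and> t \<in> S} \<le> (n - 1) choose (k - 1)"
proof -
  let ?A = "{S. S \<subseteq> {0..<n} \<and> card S = k \<and> t \<in> S}"
  let ?B = "{T. T \<subseteq> {0..<n} - {t} \<and> card T = k - 1}"
  have inj: "inj_on (\<lambda>S. S - {t}) ?A"
    by (rule inj_onI) (metis (no_types, lifting) insert_Diff mem_Collect_eq)
  have img: "(\<lambda>S. S - {t}) ` ?A \<subseteq> ?B"
  proof
    fix T assume "T \<in> (\<lambda>S. S - {t}) ` ?A"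
    then obtain S where S: "S \<subseteq> {0..<n}" "card S = k" "t \<in> S" "T = S - {t}" by blast
    have "finite S" using S(1) finite_subset by blast
    then show "T \<in> ?B" using S by auto
  qed
  have "card ?A \<le> card ?B" by (rule card_inj_on_le[OF inj img]) simp
  also have "card ?B = card ({0..<n} - {t}) choose (k - 1)" by (rule n_subsets) simp
  also have "card ({0..<n} - {t}) = n - 1" using assms by simp
  finally show ?thesis .
qed

lemma cnt_change:
  assumes "t < n" "1 \<le> k"
    and agree: "\<And>u v. u < n \<Longrightarrow> v < n \<Longrightarrow> u \<noteq> t \<Longrightarrow> v \<noteq> t \<Longrightarrow> G u v = G' u v"
  shows "cnt k H n G \<le> cnt k H n G' + ((n - 1) choose (k - 1))"
proof -
  let ?Q = "{S. S \<subseteq> {0..<n} \<and> card S = k \<and> induces_copy k H G S}"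
  let ?Q' = "{S. S \<subseteq> {0..<n} \<and> card S = k \<and> induces_copy k H G' S}"
  let ?C = "{S. S \<subseteq> {0..<n} \<and> card S = k \<and> t \<in> S}"
  have "?Q \<subseteq> ?Q' \<union> ?C"
  proof
    fix S assume S: "S \<in> ?Q"
    show "S \<in> ?Q' \<union> ?C"
    proof (cases "t \<in> S")
      case True then show ?thesis using S by auto
    next
      case False
      have "induces_copy k H G S = induces_copy k H G' S"
        using S False by (intro induces_copy_cong agree) auto
      then show ?thesis using S by auto
    qed
  qed
  moreover have fQ': "finite ?Q'" by (rule finite_subset[of _ "Pow {0..<n}"]) auto
  moreover have fC: "finite ?C" by (rule finite_subset[of _ "Pow {0..<n}"]) auto
  ultimately have "card ?Q \<le> card (?Q' \<union> ?C)"
    by (intro card_mono) auto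
  also have "\<dots> \<le> card ?Q' + card ?C" by (rule card_Un_le)
  also have "\<dots> \<le> card ?Q' + ((n - 1) choose (k - 1))"
    using card_containing[OF assms(1,2)] by simp
  finally show ?thesis by (simp add: cnt_def)
qed

lemma discrete_ivt:
  fixes c :: "nat \<Rightarrow> real"
  assumes "c 0 \<le> T" "T \<le> c N" "\<And>t. t < N \<Longrightarrow> \<bar>c (Suc t) - c t\<bar> \<le> D" "0 \<le> D"
  shows "\<exists>t\<le>N. \<bar>c t - T\<bar> \<le> D"
proof -
  define t0 where "t0 = (LEAST t. T \<le> c t)"
  have t0a: "T \<le> c t0" unfolding t0_def by (rule LeastI[of "\<lambda>t. T \<le> c t" N]) (rule assms(2))
  have t0b: "t0 \<le> N" unfolding t0_def by (rule Least_le) (rule assms(2))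
  show ?thesis
  proof (cases t0)
    case 0
    then have "\<bar>c t0 - T\<bar> \<le> D" using t0a assms(1,4) by simp
    then show ?thesis using t0b by blast
  next
    case (Suc s)
    have "s < t0" using Suc by simp
    then have ns: "\<not> T \<le> c s" unfolding t0_def by (rule not_less_Least)
    have "s < N" using Suc t0b by simp
    then have "\<bar>c (Suc s) - c s\<bar> \<le> D" by (rule assms(3))
    then have "\<bar>c t0 - T\<bar> \<le> D" using t0a ns Suc by simp
    then show ?thesis using t0b by blast
  qed
qed

lemma path_lemma:
  assumes tL: "tournament n L" and tU: "tournament n U" and cL: "inclass a n L" and cU: "inclass a n U"
    and k1: "1 \<le> k" and lo: "real (cnt k H n L) \<le> T" and hi: "T \<le> real (cnt k H n U)"
  shows "\<exists>G. tournament n G \<and> inclass a n G \<and> \<bar>real (cnt k H n G) - T\<bar> \<le> real ((n - 1) choose (k - 1))"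
proof -
  define Gt where "Gt t = (\<lambda>u v. if u < t \<and> v < t then U u v else L u v)" for t
  define c where "c t = real (cnt k H n (Gt t))" for t
  have tG: "tournament n (Gt t)" for t
  proof (rule tI)
    show "\<not> Gt t u u" if "u < n" for u using tD0[OF tL that] tD0[OF tU that] by (simp add: Gt_def)
    show "\<not> Gt t v u" if "u < n" "v < n" "u \<noteq> v" "Gt t u v" for u v
      using that tD[OF tL that(1,2)] tD[OF tU that(1,2)] by (auto simp: Gt_def split: if_splits)
    show "Gt t v u" if "u < n" "v < n" "u \<noteq> v" "\<not> Gt t u v" for u v
      using that tD2[OF tL that(1,2,3)] tD2[OF tU that(1,2,3)] by (auto simp: Gt_def split: if_splits)
  qed
  have cG: "inclass a n (Gt t)" for t using cL cU unfolding inclass_def Gt_def by auto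
  have c0: "c 0 = real (cnt k H n L)" unfolding c_def Gt_def by simp
  have cN: "c n = real (cnt k H n U)" unfolding c_def by (rule arg_cong[OF cnt_cong]) (auto simp: Gt_def)
  have step: "\<bar>c (Suc t) - c t\<bar> \<le> real ((n - 1) choose (k - 1))" if "t < n" for t
  proof -
    have ag: "Gt (Suc t) u v = Gt t u v" if "u \<noteq> t" "v \<noteq> t" for u v
      using that by (auto simp: Gt_def less_Suc_eq)
    have "cnt k H n (Gt (Suc t)) \<le> cnt k H n (Gt t) + ((n - 1) choose (k - 1))"
      by (rule cnt_change[OF \<open>t < n\<close> k1]) (use ag in auto)
    moreover have "cnt k H n (Gt t) \<le> cnt k H n (Gt (Suc t)) + ((n - 1) choose (k - 1))"
      by (rule cnt_change[OF \<open>t < n\<close> k1]) (use ag in auto)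
    ultimately show ?thesis unfolding c_def by linarith
  qed
  obtain t where "\<bar>c t - T\<bar> \<le> real ((n - 1) choose (k - 1))"
    using discrete_ivt[of c T n, OF _ _ step] lo hi c0 cN by fastforce
  then show ?thesis using tG cG unfolding c_def by blast
qed

lemma cnt_trans_zero:
  assumes "\<not> transitive_tournament k H"
  shows "cnt k H n (\<lambda>u v. u < v) = 0"
proof -
  have "\<not> induces_copy k H (\<lambda>u v. u < v) S" for S
  proof
    assume "induces_copy k H (\<lambda>u v. u < v) S"
    then obtain f where "bij_betw f {0..<k} S" and f: "\<forall>u<k. \<forall>v<k. H u v \<longleftrightarrow> f u < f v"
      unfolding induces_copy_def by (elim exE conjE)
    have "H u w" if "u < k" "v < k" "w < k" "H u v" "H v w" for u v w
    proof -
      have "f u < f v" "f v < f w" using f that by auto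
      then have "f u < f w" by simp
      then show ?thesis using f that by auto
    qed
    then have "transitive_tournament k H" unfolding transitive_tournament_def by blast
    then show False using assms by simp
  qed
  then show ?thesis by (simp add: cnt_def)
qed

lemma tournament_lt: "tournament n (\<lambda>u v. u < v)" by (rule tI) auto
lemma inclass_lt: "inclass a n (\<lambda>u v. u < v)" by (auto simp: inclass_def)

lemma tournament_Us: "tournament n (Us a \<sigma>)" by (rule tI) (auto simp: Us_def)
lemma inclass_Us: "inclass a n (Us a \<sigma>)" by (auto simp: inclass_def Us_def)

definition F4 :: "nat \<Rightarrow> nat \<Rightarrow> bool" where
  "F4 u v \<longleftrightarrow> (u,v) \<in> {(0,1),(1,2),(2,3),(3,0),(0,2),(1,3)}"

lemma less4: "(u::nat) < 4 \<longleftrightarrow> u = 0 \<or> u = 1 \<or> u = 2 \<or> u = 3" by auto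

lemma F4_alt: "F4 x y \<longleftrightarrow> (x=0 \<and> (y=1 \<or> y=2)) \<or> (x=1 \<and> (y=2 \<or> y=3)) \<or> (x=2 \<and> y=3) \<or> (x=3 \<and> y=0)"
  unfolding F4_def by auto

lemma tournament_F4: "tournament 4 F4"
  by (rule tI) (auto simp: F4_def less4)

lemma Aut_F4: "Aut 4 F4 = {id}"
proof
  show "{id} \<subseteq> Aut 4 F4" using id_Aut by auto
  show "Aut 4 F4 \<subseteq> {id}"
  proof
    fix p assume p: "p \<in> Aut 4 F4"
    then have perm: "p permutes {0..<4}" and pres: "\<And>u v. u < 4 \<Longrightarrow> v < 4 \<Longrightarrow> F4 u v = F4 (p u) (p v)"
      by (auto simp: Aut_def)
    have r: "p u < 4" if "u < 4" for u using permutes_in_image[OF perm] that by auto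
    have e01: "F4 (p 0) (p 1)" and e12: "F4 (p 1) (p 2)" and e23: "F4 (p 2) (p 3)" and e30: "F4 (p 3) (p 0)"
      and e02: "F4 (p 0) (p 2)" and e13: "F4 (p 1) (p 3)"
      using pres[of 0 1] pres[of 1 2] pres[of 2 3] pres[of 3 0] pres[of 0 2] pres[of 1 3]
      by (auto simp: F4_def)
    have "p 0 = 0 \<and> p 1 = 1 \<and> p 2 = 2 \<and> p 3 = 3"
    proof -
      from e01 consider "p 0 = 0" | "p 0 = 1" | "p 0 = 2" | "p 0 = 3" unfolding F4_alt by auto
      then show ?thesis
      proof cases
        case 1 then show ?thesis using e01 e12 e23 e30 e02 e13 unfolding F4_alt by auto
      next
        case 2 then show ?thesis using e01 e12 e23 e30 e02 e13 unfolding F4_alt by auto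
      next
        case 3 then show ?thesis using e01 e12 e23 e30 e02 e13 unfolding F4_alt by auto
      next
        case 4 then show ?thesis using e01 e12 e23 e30 e02 e13 unfolding F4_alt by auto
      qed
    qed
    then have "p x = x" for x
    proof -
      assume h: "p 0 = 0 \<and> p 1 = 1 \<and> p 2 = 2 \<and> p 3 = 3"
      show "p x = x"
      proof (cases "x < 4")
        case True then show ?thesis using h less4 by auto
      next
        case False then show ?thesis using perm by (auto simp: permutes_def)
      qed
    qed
    then show "p \<in> {id}" by auto
  qed
qed

lemma c42: "(4::nat) choose 2 = 6" by (simp add: choose_two)

lemma rd_F4: "random_density 4 F4 = 3/8"
  unfolding random_density_def Aut_F4 by (simp add: c42 fact_numeral)

lemma cnt_F4_le:
  assumes tG: "tournament n G" and cG: "inclass a n G" and an: "a \<le> n"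
  shows "cnt 4 F4 n G \<le> (a choose 4) + ((n - a) choose 4)"
proof -
  let ?Q = "{S. S \<subseteq> {0..<n} \<and> card S = 4 \<and> induces_copy 4 F4 G S}"
  have sub: "?Q \<subseteq> {S. S \<subseteq> {0..<a} \<and> card S = 4} \<union> {S. S \<subseteq> {a..<n} \<and> card S = 4}"
  proof
    fix S assume S: "S \<in> ?Q"
    then obtain f where f: "bij_betw f {0..<4} S" "\<forall>u<4. \<forall>v<4. F4 u v \<longleftrightarrow> G (f u) (f v)"
      unfolding induces_copy_def by blast
    have fS: "f u \<in> S" if "u < 4" for u using f(1) that by (auto simp: bij_betw_def)
    have fn: "f u < n" if "u < 4" for u using fS[OF that] S by auto
    have noback: "f w < a \<longrightarrow> f u < a" if "u < 4" "w < 4" "F4 u w" for u w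
    proof
      assume h: "f w < a"
      have g: "G (f u) (f w)" using f(2) that by auto
      show "f u < a"
      proof (rule ccontr)
        assume "\<not> f u < a"
        then have "G (f w) (f u)" using cG h fn[OF that(1)] unfolding inclass_def by auto
        then show False using g tD[OF tG fn[OF that(1)] fn[OF that(2)]] by blast
      qed
    qed
    have n0: "f 1 < a \<longrightarrow> f 0 < a" by (rule noback) (auto simp: F4_def)
    have n1: "f 2 < a \<longrightarrow> f 1 < a" by (rule noback) (auto simp: F4_def)
    have n2: "f 3 < a \<longrightarrow> f 2 < a" by (rule noback) (auto simp: F4_def)
    have n3: "f 0 < a \<longrightarrow> f 3 < a" by (rule noback) (auto simp: F4_def)
    have all: "(f 0 < a) = (f 1 < a) \<and> (f 1 < a) = (f 2 < a) \<and> (f 2 < a) = (f 3 < a)"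
      using n0 n1 n2 n3 by blast
    have Sim: "S = f ` {0..<4}" using f(1) by (auto simp: bij_betw_def)
    have "{0..<4::nat} = {0,1,2,3}" by auto
    then have img: "f ` {0..<4} = {f 0, f 1, f 2, f 3}" by simp
    show "S \<in> {S. S \<subseteq> {0..<a} \<and> card S = 4} \<union> {S. S \<subseteq> {a..<n} \<and> card S = 4}"
    proof (cases "f 0 < a")
      case True
      then have "f 0 < a" "f 1 < a" "f 2 < a" "f 3 < a" using all by blast+
      then have "S \<subseteq> {0..<a}" unfolding Sim img by auto
      then show ?thesis using S by auto
    next
      case False
      then have "\<not> f 0 < a" "\<not> f 1 < a" "\<not> f 2 < a" "\<not> f 3 < a" using all by blast+
      moreover have "f 0 < n" "f 1 < n" "f 2 < n" "f 3 < n" using fn by auto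
      ultimately have "S \<subseteq> {a..<n}" unfolding Sim img by auto
      then show ?thesis using S by auto
    qed
  qed
  have "cnt 4 F4 n G \<le> card ({S. S \<subseteq> {0..<a} \<and> card S = 4} \<union> {S. S \<subseteq> {a..<n} \<and> card S = 4})"
    unfolding cnt_def by (rule card_mono[OF _ sub]) auto
  also have "\<dots> \<le> card {S. S \<subseteq> {0..<a} \<and> card S = 4} + card {S. S \<subseteq> {a..<n} \<and> card S = 4}"
    by (rule card_Un_le)
  also have "\<dots> = (a choose 4) + ((n - a) choose 4)"
    using n_subsets[of "{0..<a}" 4] n_subsets[of "{a..<n}" 4] by simp
  finally show ?thesis .
qed

lemma ffr_lim: "(\<lambda>i. ffr (p * i) t / real i ^ t) \<longlonglongrightarrow> real p ^ t"
proof -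
  have eq: "(\<Prod>s = 0..<t. real p - real s / real i) = ffr (p * i) t / real i ^ t" if "i > 0" for i
  proof -
    have "(\<Prod>s = 0..<t. real p - real s / real i) = (\<Prod>s = 0..<t. (real (p*i) - real s) / real i)"
      using that by (intro prod.cong) (auto simp: field_simps)
    also have "\<dots> = (\<Prod>s = 0..<t. (real (p*i) - real s)) / (\<Prod>s = 0..<t. real i)"
      by (rule prod_dividef)
    also have "\<dots> = ffr (p * i) t / real i ^ t" by (simp add: ffr_def)
    finally show ?thesis .
  qed
  have "(\<lambda>i. \<Prod>s = 0..<t. real p - real s / real i) \<longlonglongrightarrow> (\<Prod>s = 0..<t. real p - 0)"
    by (intro tendsto_prod tendsto_diff tendsto_const lim_const_over_n)
  then have "(\<lambda>i. \<Prod>s = 0..<t. real p - real s / real i) \<longlonglongrightarrow> real p ^ t" by simp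
  then show ?thesis
    by (rule Lim_transform_eventually) (use eq in \<open>auto simp: eventually_sequentially intro!: exI[of _ 1]\<close>)
qed

lemma exists_dom:
  assumes tH: "tournament k H" and nsc: "\<not> strongly_connected k H"
  shows "\<exists>B. dominating k H B \<and> 0 < card B \<and> card B < k"
proof -
  define R where "R = (\<lambda>x y. x < k \<and> y < k \<and> H x y)"
  obtain u v where uv: "u < k" "v < k" "\<not> R\<^sup>*\<^sup>* u v"
    using nsc unfolding strongly_connected_def R_def by blast
  define B where "B = {w. w < k \<and> R\<^sup>*\<^sup>* w v}"
  have Bk: "B \<subseteq> {0..<k}" by (auto simp: B_def)
  have dom: "dominating k H B"
    unfolding dominating_def
  proof (intro conjI ballI allI impI Bk)
    fix b w assume b: "b \<in> B" and w: "w < k" "w \<notin> B"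
    have bk: "b < k" and bv: "R\<^sup>*\<^sup>* b v" using b by (auto simp: B_def)
    have "b \<noteq> w" using b w by auto
    show "H b w"
    proof (rule ccontr)
      assume "\<not> H b w"
      then have "H w b" using tD2[OF tH bk w(1) \<open>b \<noteq> w\<close>] by blast
      then have "R w b" using bk w by (simp add: R_def)
      then have "R\<^sup>*\<^sup>* w v" using bv by (rule converse_rtranclp_into_rtranclp)
      then show False using w by (simp add: B_def)
    qed
  qed
  have "v \<in> B" using uv by (simp add: B_def)
  moreover have finB: "finite B" using Bk finite_subset by blast
  ultimately have "0 < card B" by (auto simp: card_gt_0_iff)
  moreover have "u \<notin> B" using uv by (simp add: B_def)
  then have "B \<subseteq> {0..<k} - {u}" using Bk by auto
  then have "card B \<le> k - 1" using card_mono[of "{0..<k} - {u}" B] uv by simp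
  then have "card B < k" using uv by simp
  ultimately show ?thesis using dom by blast
qed

lemma k_ge4:
  assumes tH: "tournament k H" and nt: "\<not> transitive_tournament k H"
    and dom: "dominating k H B" and B: "0 < card B" "card B < k"
  shows "4 \<le> k"
proof -
  obtain x y z where xyz: "x < k" "y < k" "z < k" "H x y" "H y z" "\<not> H x z"
    using nt unfolding transitive_tournament_def by blast
  have "x \<noteq> y" using tD0[OF tH xyz(1)] xyz by auto
  have "y \<noteq> z" using tD0[OF tH xyz(2)] xyz by auto
  have "x \<noteq> z" using tD[OF tH xyz(2) xyz(1)] xyz by auto
  have Hzx: "H z x" using tD2[OF tH xyz(1) xyz(3) \<open>x \<noteq> z\<close>] xyz by blast
  have Bk: "B \<subseteq> {0..<k}" using dom by (simp add: dominating_def)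
  have bck: "s \<in> B" if "s < k" "t < k" "H s t" "t \<in> B" for s t
  proof (rule ccontr)
    assume "s \<notin> B"
    then have "H t s" using dom that by (auto simp: dominating_def)
    then show False using tD[OF tH that(1,2,3)] by blast
  qed
  have e1: "y \<in> B \<Longrightarrow> x \<in> B" using bck xyz by blast
  have e2: "z \<in> B \<Longrightarrow> y \<in> B" using bck xyz by blast
  have e3: "x \<in> B \<Longrightarrow> z \<in> B" using bck[OF xyz(3) xyz(1) Hzx] by blast
  have c3: "card {x,y,z} = 3" using \<open>x \<noteq> y\<close> \<open>y \<noteq> z\<close> \<open>x \<noteq> z\<close> by simp
  have finB: "finite B" using Bk finite_subset by blast
  show ?thesis
  proof (cases "x \<in> B")
    case True
    then have "{x,y,z} \<subseteq> B" using e1 e2 e3 by blast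
    then have "3 \<le> card B" using card_mono[OF finB] c3 by metis
    then show ?thesis using B by simp
  next
    case False
    then have "{x,y,z} \<subseteq> {0..<k} - B" using e1 e2 e3 xyz by auto
    then have "3 \<le> card ({0..<k} - B)" using card_mono[of "{0..<k} - B"] c3 by (metis finite_Diff finite_atLeastLessThan)
    also have "card ({0..<k} - B) = k - card B" using Bk finB by (simp add: card_Diff_subset)
    finally show ?thesis using B by simp
  qed
qed

lemma ineq_34:
  assumes "4 \<le> k"
  shows "(4::nat) ^ k < 3 ^ k + 2 ^ (k - 1) * 3 ^ (k - 1)"
proof -
  obtain m where k: "k = m + 4" using assms by (metis add.commute le_Suc_ex)
  have "(4::nat) ^ (m + 4) < 3 ^ (m + 4) + 2 ^ (m + 3) * 3 ^ (m + 3)"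
  proof (induction m)
    case 0 then show ?case by simp
  next
    case (Suc m)
    define X :: nat where "X = 2 ^ (m + 3) * 3 ^ (m + 3)"
    define Y :: nat where "Y = 3 ^ (m + 4)"
    have IH: "4 ^ (m + 4) < Y + X" using Suc by (simp add: X_def Y_def)
    have "(2::nat) ^ 3 \<le> 2 ^ (m + 3)" by (rule power_increasing) auto
    then have "(3::nat) \<le> 2 * 2 ^ (m + 3)" by simp
    then have "(3::nat) * 3 ^ (m + 3) \<le> (2 * 2 ^ (m + 3)) * 3 ^ (m + 3)" by (rule mult_right_mono) simp
    moreover have "(3::nat) ^ (m + 4) = 3 * 3 ^ (m + 3)" by (simp add: power_add)
    ultimately have YX: "Y \<le> 2 * X" unfolding X_def Y_def by (simp add: mult.assoc)
    have "(4::nat) ^ (Suc m + 4) = 4 * 4 ^ (m + 4)" by (simp add: power_add)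
    also have "\<dots> < 4 * (Y + X)" using IH by simp
    also have "\<dots> \<le> 3 * Y + 6 * X" using YX by simp
    also have "3 * Y + 6 * X = 3 ^ (Suc m + 4) + 2 ^ (Suc m + 3) * 3 ^ (Suc m + 3)"
      by (simp add: X_def Y_def power_add)
    finally show ?case .
  qed
  then show ?thesis using k by (simp add: add.commute)
qed

lemma choose_p:
  assumes k4: "4 \<le> k" and j: "0 < j" "j < k"
  shows "\<exists>p\<in>{1,2,3::nat}. (4::real) ^ k < real p ^ k + real (4 - p) ^ k
            + 2 ^ (j * (k - j)) * real p ^ j * real (4 - p) ^ (k - j)"
proof -
  have I: "(4::real) ^ k < 3 ^ k + 2 ^ (k - 1) * 3 ^ (k - 1)"
  proof -
    have "real ((4::nat) ^ k) < real (3 ^ k + 2 ^ (k - 1) * 3 ^ (k - 1))"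
      using ineq_34[OF k4] by (simp only: of_nat_less_iff)
    then show ?thesis by simp
  qed
  consider "j = 1" | "j = k - 1" | "2 \<le> j" "j \<le> k - 2" using j by linarith
  then show ?thesis
  proof cases
    case 1
    have "(4::real) ^ k < real (1::nat) ^ k + real (4 - 1::nat) ^ k
            + 2 ^ (j * (k - j)) * real (1::nat) ^ j * real (4 - 1::nat) ^ (k - j)"
      using I 1 by simp
    then show ?thesis by blast
  next
    case 2
    then have kj: "k - j = 1" using j by simp
    have "(4::real) ^ k < real (3::nat) ^ k + real (4 - 3::nat) ^ k
            + 2 ^ (j * (k - j)) * real (3::nat) ^ j * real (4 - 3::nat) ^ (k - j)"
      using I 2 kj by (simp add: mult.commute)
    then show ?thesis by blast
  next
    case 3
    have a: "2 * (k - j) \<le> j * (k - j)" using 3 by (intro mult_right_mono) auto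
    have b: "j * 2 \<le> j * (k - j)" using 3 by (intro mult_left_mono) auto
    have kk: "k = j + (k - j)" using j by simp
    have ge: "k \<le> j * (k - j)" using a b kk by linarith
    have "(4::real) ^ k = 2 ^ (k + k)" by (simp add: power_add power_mult_distrib[symmetric])
    also have "\<dots> \<le> 2 ^ (j * (k - j) + k)" using ge by (intro power_increasing) auto
    also have "\<dots> = 2 ^ (j * (k - j)) * 2 ^ j * 2 ^ (k - j)"
      using j by (simp add: power_add[symmetric])
    also have "\<dots> < 2 ^ k + 2 ^ k + 2 ^ (j * (k - j)) * 2 ^ j * 2 ^ (k - j)" by simp
    also have "\<dots> = real (2::nat) ^ k + real (4 - 2::nat) ^ k
            + 2 ^ (j * (k - j)) * real (2::nat) ^ j * real (4 - 2::nat) ^ (k - j)" by simp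
    finally show ?thesis by blast
  qed
qed

lemma rd_nonneg: "0 \<le> random_density k H" by (simp add: random_density_def)

lemma Aut_T: "real (card (Aut k H)) * (random_density k H * real (n choose k)) = ffr n k / 2 ^ (k choose 2)"
proof -
  have "real (card (Aut k H)) \<noteq> 0" using card_Aut_pos[of k H] by simp
  then show ?thesis using binom_ffr[of n k] by (simp add: random_density_def field_simps)
qed

lemma asym_main:
  assumes V: "(4::real) ^ k < real p ^ k + real (4 - p) ^ k + 2 ^ (j * (k - j)) * real p ^ j * real (4 - p) ^ (k - j)"
    and jk: "j \<le> k"
  shows "eventually (\<lambda>i. ffr (4 * i) k \<le> ffr ((4 - p) * i) k + ffr (p * i) k
           + 2 ^ (j * (k - j)) * (ffr (p * i) j * ffr ((4 - p) * i) (k - j))) sequentially"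
proof -
  define W where "W = (\<lambda>i. ffr ((4 - p) * i) k / real i ^ k + ffr (p * i) k / real i ^ k
     + 2 ^ (j * (k - j)) * ((ffr (p * i) j / real i ^ j) * (ffr ((4 - p) * i) (k - j) / real i ^ (k - j))))"
  define L where "L = real (4 - p) ^ k + real p ^ k + 2 ^ (j * (k - j)) * (real p ^ j * real (4 - p) ^ (k - j))"
  have lW: "W \<longlonglongrightarrow> L" unfolding W_def L_def
    by (intro tendsto_add tendsto_mult tendsto_const ffr_lim)
  have lN: "(\<lambda>i. ffr (4 * i) k / real i ^ k) \<longlonglongrightarrow> real (4::nat) ^ k" by (rule ffr_lim)
  have "(\<lambda>i. W i - ffr (4 * i) k / real i ^ k) \<longlonglongrightarrow> L - real (4::nat) ^ k"
    by (intro tendsto_diff lW lN)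
  moreover have "0 < L - real (4::nat) ^ k" using V by (simp add: L_def algebra_simps)
  ultimately have ev: "eventually (\<lambda>i. 0 < W i - ffr (4 * i) k / real i ^ k) sequentially"
    by (rule order_tendstoD)
  have ev1: "eventually (\<lambda>i. 0 < i) sequentially" by (rule eventually_gt_at_top)
  show ?thesis using eventually_conj[OF ev ev1]
  proof (rule eventually_mono)
    fix i :: nat assume h: "0 < W i - ffr (4 * i) k / real i ^ k \<and> 0 < i"
    have ip: "0 < real i ^ k" using h by simp
    have pw: "real i ^ k = real i ^ j * real i ^ (k - j)" using jk by (simp add: power_add[symmetric])
    have "W i = (ffr ((4 - p) * i) k + ffr (p * i) k
           + 2 ^ (j * (k - j)) * (ffr (p * i) j * ffr ((4 - p) * i) (k - j))) / real i ^ k"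
      unfolding W_def pw using h by (simp add: field_simps)
    then have "0 < (ffr ((4 - p) * i) k + ffr (p * i) k
           + 2 ^ (j * (k - j)) * (ffr (p * i) j * ffr ((4 - p) * i) (k - j)) - ffr (4 * i) k) / real i ^ k"
      using h by (simp add: diff_divide_distrib)
    then show "ffr (4 * i) k \<le> ffr ((4 - p) * i) k + ffr (p * i) k
           + 2 ^ (j * (k - j)) * (ffr (p * i) j * ffr ((4 - p) * i) (k - j))"
      using ip by (simp add: zero_less_divide_iff)
  qed
qed

lemma ratio4_lim:
  assumes "p \<le> 4"
  shows "(\<lambda>i. (ffr (p * i) 4 + ffr ((4 - p) * i) 4) / ffr (4 * i) 4) \<longlonglongrightarrow> (real p ^ 4 + real (4 - p) ^ 4) / 4 ^ 4"
proof -
  have l: "(\<lambda>i. (ffr (p * i) 4 / real i ^ 4 + ffr ((4 - p) * i) 4 / real i ^ 4) / (ffr (4 * i) 4 / real i ^ 4))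
        \<longlonglongrightarrow> (real p ^ 4 + real (4 - p) ^ 4) / real (4::nat) ^ 4"
    by (intro tendsto_divide tendsto_add ffr_lim) simp
  have "eventually (\<lambda>i. (ffr (p * i) 4 / real i ^ 4 + ffr ((4 - p) * i) 4 / real i ^ 4) / (ffr (4 * i) 4 / real i ^ 4)
       = (ffr (p * i) 4 + ffr ((4 - p) * i) 4) / ffr (4 * i) 4) sequentially"
    using eventually_gt_at_top[of 0]
  proof (rule eventually_mono)
    fix i :: nat assume "0 < i"
    then have "real i ^ 4 \<noteq> 0" by simp
    then show "(ffr (p * i) 4 / real i ^ 4 + ffr ((4 - p) * i) 4 / real i ^ 4) / (ffr (4 * i) 4 / real i ^ 4)
       = (ffr (p * i) 4 + ffr ((4 - p) * i) 4) / ffr (4 * i) 4"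
      by (simp add: add_divide_distrib[symmetric])
  qed
  from Lim_transform_eventually[OF l this] show ?thesis by simp
qed

theorem proposition3p1:
  fixes k :: nat and H :: "nat \<Rightarrow> nat \<Rightarrow> bool"
  assumes "tournament k H"
    and "\<not> transitive_tournament k H"
    and "\<not> strongly_connected k H"
  shows "\<not> quasirandom_forcing k H"
proof
  assume qf: "quasirandom_forcing k H"
  obtain B0 where dom: "dominating k H B0" and B0: "0 < card B0" "card B0 < k"
    using exists_dom[OF assms(1,3)] by blast
  have k4: "4 \<le> k" by (rule k_ge4[OF assms(1,2) dom B0])
  define j where "j = card B0"
  have j: "0 < j" "j < k" using B0 by (auto simp: j_def)
  obtain p where p: "p \<in> {1,2,3::nat}" and V: "(4::real) ^ k < real p ^ k + real (4 - p) ^ k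
            + 2 ^ (j * (k - j)) * real p ^ j * real (4 - p) ^ (k - j)"
    using choose_p[OF k4 j] by blast
  have p4: "p \<le> 4" using p by auto
  define sz where "sz = (\<lambda>i::nat. 4 * i)"
  define aa where "aa = (\<lambda>i::nat. p * i)"
  define rd where "rd = random_density k H"
  define T where "T = (\<lambda>i. rd * real (sz i choose k))"
  define D where "D = (\<lambda>i. real ((sz i - 1) choose (k - 1)))"
  define good where "good = (\<lambda>i G. tournament (sz i) G \<and> inclass (aa i) (sz i) G \<and>
        ((\<exists>U. tournament (sz i) U \<and> inclass (aa i) (sz i) U \<and> T i \<le> real (cnt k H (sz i) U))
            \<longrightarrow> \<bar>real (cnt k H (sz i) G) - T i\<bar> \<le> D i))"
  define Gs where "Gs = (\<lambda>i. SOME G. good i G)"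
  have exg: "\<exists>G. good i G" for i
  proof (cases "\<exists>U. tournament (sz i) U \<and> inclass (aa i) (sz i) U \<and> T i \<le> real (cnt k H (sz i) U)")
    case True
    then obtain U where U: "tournament (sz i) U" "inclass (aa i) (sz i) U" "T i \<le> real (cnt k H (sz i) U)"
      by blast
    have lo: "real (cnt k H (sz i) (\<lambda>u v. u < v)) \<le> T i"
      using cnt_trans_zero[OF assms(2)] rd_nonneg[of k H] by (simp add: T_def rd_def)
    have "1 \<le> k" using k4 by simp
    from path_lemma[OF tournament_lt U(1) inclass_lt U(2) this lo U(3)]
    obtain G where "tournament (sz i) G" "inclass (aa i) (sz i) G" "\<bar>real (cnt k H (sz i) G) - T i\<bar> \<le> D i"
      unfolding D_def by blast
    then show ?thesis unfolding good_def by blast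
  next
    case False
    then show ?thesis unfolding good_def using tournament_lt inclass_lt by blast
  qed
  have gd: "good i (Gs i)" for i unfolding Gs_def using exg[of i] by (rule someI_ex)
  have tG: "\<And>i. tournament (sz i) (Gs i)" using gd unfolding good_def by blast
  have cG: "\<And>i. inclass (aa i) (sz i) (Gs i)" using gd unfolding good_def by blast
  have szlim: "filterlim sz at_top sequentially"
    unfolding sz_def by (rule filterlim_at_top_mono[OF filterlim_ident]) auto
  have evU: "eventually (\<lambda>i. \<exists>U. tournament (sz i) U \<and> inclass (aa i) (sz i) U \<and> T i \<le> real (cnt k H (sz i) U)) sequentially"
    using asym_main[OF V less_imp_le[OF j(2)]]
  proof (rule eventually_mono)
    fix i assume h: "ffr (4 * i) k \<le> ffr ((4 - p) * i) k + ffr (p * i) k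
           + 2 ^ (j * (k - j)) * (ffr (p * i) j * ffr ((4 - p) * i) (k - j))"
    have an: "aa i \<le> sz i" using p4 by (simp add: aa_def sz_def)
    have nma: "sz i - aa i = (4 - p) * i" by (simp add: sz_def aa_def diff_mult_distrib)
    obtain \<sigma> where \<sigma>: "(ffr (sz i - aa i) k + ffr (aa i) k) / 2 ^ (k choose 2)
               + ffr (aa i) j * ffr (sz i - aa i) (k - j) / 2 ^ ((j choose 2) + ((k - j) choose 2))
             \<le> real (card (Aut k H)) * real (cnt k H (sz i) (Us (aa i) \<sigma>))"
      using exists_good_U[OF assms(1) dom j_def[symmetric] j an] by blast
    have c2: "k choose 2 = ((j choose 2) + ((k - j) choose 2)) + j * (k - j)"
      using choose2_split[of j k] j by simp
    have "real (card (Aut k H)) * T i = ffr (sz i) k / 2 ^ (k choose 2)" unfolding T_def rd_def by (rule Aut_T)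
    also have "\<dots> \<le> (ffr (sz i - aa i) k + ffr (aa i) k) / 2 ^ (k choose 2)
               + ffr (aa i) j * ffr (sz i - aa i) (k - j) / 2 ^ ((j choose 2) + ((k - j) choose 2))"
    proof -
      have "ffr (sz i) k \<le> ffr (sz i - aa i) k + ffr (aa i) k + 2 ^ (j * (k - j)) * (ffr (aa i) j * ffr (sz i - aa i) (k - j))"
        using h unfolding nma by (simp add: sz_def aa_def)
      then have "ffr (sz i) k / 2 ^ (k choose 2) \<le> (ffr (sz i - aa i) k + ffr (aa i) k + 2 ^ (j * (k - j)) * (ffr (aa i) j * ffr (sz i - aa i) (k - j))) / 2 ^ (k choose 2)"
        by (intro divide_right_mono) auto
      also have "\<dots> = (ffr (sz i - aa i) k + ffr (aa i) k) / 2 ^ (k choose 2)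
               + ffr (aa i) j * ffr (sz i - aa i) (k - j) / 2 ^ ((j choose 2) + ((k - j) choose 2))"
        unfolding c2 by (simp add: power_add field_simps)
      finally show ?thesis .
    qed
    also have "\<dots> \<le> real (card (Aut k H)) * real (cnt k H (sz i) (Us (aa i) \<sigma>))" by (rule \<sigma>)
    finally have "T i \<le> real (cnt k H (sz i) (Us (aa i) \<sigma>))"
      using card_Aut_pos[of k H] by (simp add: mult_le_cancel_left_pos)
    then show "\<exists>U. tournament (sz i) U \<and> inclass (aa i) (sz i) U \<and> T i \<le> real (cnt k H (sz i) U)"
      using tournament_Us inclass_Us by blast
  qed
  have evk: "eventually (\<lambda>i. k \<le> i) sequentially" by (rule eventually_ge_at_top)
  have bound: "eventually (\<lambda>i. \<bar>density k H (sz i) (Gs i) - rd\<bar> \<le> (real k / 4) / real i) sequentially"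
    using eventually_conj[OF evU evk]
  proof (rule eventually_mono)
    fix i assume h: "(\<exists>U. tournament (sz i) U \<and> inclass (aa i) (sz i) U \<and> T i \<le> real (cnt k H (sz i) U)) \<and> k \<le> i"
    then have close: "\<bar>real (cnt k H (sz i) (Gs i)) - T i\<bar> \<le> D i" using gd[of i] unfolding good_def by blast
    have kn: "k \<le> sz i" using h by (simp add: sz_def)
    have Cpos: "0 < real (sz i choose k)" using kn by simp
    have k1: "1 \<le> k" using k4 by simp
    have abs: "Suc (k - 1) * (sz i choose Suc (k - 1)) = sz i * ((sz i - 1) choose (k - 1))"
      by (rule binomial_absorption)
    then have absr: "real k * real (sz i choose k) = real (sz i) * D i"
      using k1 unfolding D_def by (metis Suc_diff_1 less_le_trans of_nat_mult zero_less_one)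
    have ip: "0 < real i" using h k4 by simp
    have "density k H (sz i) (Gs i) - rd = (real (cnt k H (sz i) (Gs i)) - T i) / real (sz i choose k)"
      using Cpos by (simp add: density_cnt T_def field_simps)
    then have "\<bar>density k H (sz i) (Gs i) - rd\<bar> = \<bar>real (cnt k H (sz i) (Gs i)) - T i\<bar> / real (sz i choose k)"
      using Cpos by simp
    also have "\<dots> \<le> D i / real (sz i choose k)" using close Cpos by (simp add: divide_right_mono)
    also have "\<dots> = real k / real (sz i)" using absr Cpos ip by (simp add: field_simps sz_def)
    also have "\<dots> = (real k / 4) / real i" by (simp add: sz_def)
    finally show "\<bar>density k H (sz i) (Gs i) - rd\<bar> \<le> (real k / 4) / real i" .
  qed
  have z: "(\<lambda>i. (real k / 4) / real i) \<longlonglongrightarrow> 0" by (rule lim_const_over_n)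
  have dens: "(\<lambda>i. density k H (sz i) (Gs i)) \<longlonglongrightarrow> rd"
  proof (rule tendsto_sandwich)
    show "eventually (\<lambda>i. rd - (real k / 4) / real i \<le> density k H (sz i) (Gs i)) sequentially"
      using bound by (rule eventually_mono) linarith
    show "eventually (\<lambda>i. density k H (sz i) (Gs i) \<le> rd + (real k / 4) / real i) sequentially"
      using bound by (rule eventually_mono) linarith
    show "(\<lambda>i. rd - (real k / 4) / real i) \<longlonglongrightarrow> rd" using tendsto_diff[OF tendsto_const z] by simp
    show "(\<lambda>i. rd + (real k / 4) / real i) \<longlonglongrightarrow> rd" using tendsto_add[OF tendsto_const z] by simp
  qed
  have qr: "quasirandom sz Gs"
    using qf tG szlim dens unfolding quasirandom_forcing_def rd_def by blast
  then have l4: "(\<lambda>i. density 4 F4 (sz i) (Gs i)) \<longlonglongrightarrow> 3 / 8"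
    using tournament_F4 rd_F4 unfolding quasirandom_def by metis
  have ub: "\<exists>N. \<forall>i\<ge>N. density 4 F4 (sz i) (Gs i) \<le> (ffr (p * i) 4 + ffr ((4 - p) * i) 4) / ffr (4 * i) 4"
  proof (intro exI allI impI)
    fix i :: nat assume i1: "1 \<le> i"
    have n4: "4 \<le> sz i" using i1 by (simp add: sz_def)
    have Cpos: "0 < real (sz i choose 4)" using n4 by simp
    have an: "aa i \<le> sz i" using p4 by (simp add: aa_def sz_def)
    have nma: "sz i - aa i = (4 - p) * i" by (simp add: sz_def aa_def diff_mult_distrib)
    have "density 4 F4 (sz i) (Gs i) = real (cnt 4 F4 (sz i) (Gs i)) / real (sz i choose 4)"
      by (rule density_cnt)
    also have "\<dots> \<le> real ((aa i choose 4) + ((sz i - aa i) choose 4)) / real (sz i choose 4)"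
      using cnt_F4_le[OF tG cG an] Cpos by (intro divide_right_mono) auto
    also have "\<dots> = (real (aa i choose 4) * fact 4 + real ((sz i - aa i) choose 4) * fact 4) / (real (sz i choose 4) * fact 4)"
      by (simp only: of_nat_add distrib_right[symmetric] mult_divide_mult_cancel_right[OF fact_nonzero])
    also have "\<dots> = (ffr (p * i) 4 + ffr ((4 - p) * i) 4) / ffr (4 * i) 4"
      unfolding binom_ffr nma by (simp add: aa_def sz_def)
    finally show "density 4 F4 (sz i) (Gs i) \<le> (ffr (p * i) 4 + ffr ((4 - p) * i) 4) / ffr (4 * i) 4" .
  qed
  have "3 / 8 \<le> (real p ^ 4 + real (4 - p) ^ 4) / 4 ^ 4"
    by (rule LIMSEQ_le[OF l4 ratio4_lim[OF p4] ub])
  then show False using p by auto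
qed

end
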